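(* Assume one of the following: (i) $\mathfrak{D}'=\mathfrak{D}$ and $R_1,R_2\in\mathfrak{D}$; (ii) $\mathfrak{T}_a\subseteq\mathfrak{D}'\subseteq\mathfrak{D}$ and $R_1,R_2\in\mathfrak{T}_a$; (iii) $\mathfrak{D}'\in\{\mathfrak{P},\mathfrak{P}^*\}$ and $R_1,R_2\in\mathfrak{D}'$. Then for all $S_1,S_2\in\mathfrak{D}$: if $R_1\sqsubseteq_\Gamma S_1$ and $R_2\sqsubseteq_\Gamma S_2$ with respect to $\mathfrak{D}'$, then $R_1+R_2\sqsubseteq_\Gamma S_1+S_2$ with respect to $\mathfrak{D}'$. Here $+$ denotes the direct (disjoint) sum of digraphs.
   Context: **Digraphs and homomorphisms.** - A digraph $G$ is a pair $(V(G),A(G))$, where $V(G)$ is a finite non-empty set and $A(G)\subseteq V(G)\times V(G)$. Arcs are written $vw$. - $G^*$ is $G$ with all loops $vv$ removed. - A homomorphism $\xi:G\to H$ is a map $V(G)\to V(H)$ with $\xi(v)\xi(w)\in A(H)$ for all $vw\in A(G)$. $\mathcal{H}(G,H)$ is the set of homomorphisms. - A walk is a sequence $v_0,\dots,v_I$ with $I\ge1$ and $v_{i-1}v_i\in A(G)$ for all $i$. It is closed if $v_0=v_I$. **Classes of digraphs.** - $\mathfrak{D}$ is the class of all digraphs. - $\mathfrak{P}$ is the class of finite posets. - $\mathfrak{P}^*=\{P^*:P\in\mathfrak{P}\}$. - $\mathfrak{T}_a=\{G\in\mathfrak{D}: G^*\text{ contains no closed walk}\}$. **Connectivity.** - Two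 vertices $u,w$ are adjacent if $uw\in A(G)$ or $wu\in A(G)$. - For $X\subseteq V(G)$ and $v,w\in X$, the vertices $v$ and $w$ are connected in $X$ if $v=w$, or if there are $z_0=v,\dots,z_I=w$ in $X$ with consecutive terms adjacent. - $\gamma_X(v)$ is the set of $w\in X$ connected to $v$ in $X$. - $\Gamma_\xi(v):=\gamma_{\xi^{-1}(\xi(v))}(v)$. **Schemes.** - $\mathfrak{D}'_r$ is a fixed system of representatives of $\mathfrak{D}'$ up to isomorphism. - A Hom-scheme from $R$ to $S$ with respect to $\mathfrak{D}'$ is a family of maps $\rho_G:\mathcal{H}(G,R)\to\mathcal{H}(G,S)$, $G\in\mathfrak{D}'_r$. - It is strong if all $\rho_G$ are injective. - It is a $\Gamma$-scheme if $\Gamma_{\rho_G(\xi)}(v)=\Gamma_\xi(v)$ for all $G$, $\xi$ and $v$. - $R\sqsubseteq_\Gamma S$ with respect to $\mathfrak{D}'$ means that a strong $\Gamma$-scheme exists. *)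

theory Defs
  imports "HOL-Library.FuncSet"
begin

type_synonym 'a digraph = "'a set \<times> ('a \<times> 'a) set"

definition verts :: "'a digraph \<Rightarrow> 'a set" where "verts G = fst G"
definition arcs :: "'a digraph \<Rightarrow> ('a \<times> 'a) set" where "arcs G = snd G"

definition is_digraph :: "'a digraph \<Rightarrow> bool" where
  "is_digraph G \<longleftrightarrow> finite (verts G) \<and> verts G \<noteq> {} \<and> arcs G \<subseteq> verts G \<times> verts G"

definition loopfree :: "'a digraph \<Rightarrow> 'a digraph" where
  "loopfree G = (verts G, arcs G - {(v, v) | v. True})"

definition homs :: "'a digraph \<Rightarrow> 'b digraph \<Rightarrow> ('a \<Rightarrow> 'b) set" where
  "homs G H = {\<xi> \<in> verts G \<rightarrow>\<^sub>E verts H. \<forall>(v, w) \<in> arcs G. (\<xi> v, \<xi> w) \<in> arcs H}"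

definition is_walk :: "'a digraph \<Rightarrow> 'a list \<Rightarrow> bool" where
  "is_walk G xs \<longleftrightarrow> length xs \<ge> 2 \<and> (\<forall>i. Suc i < length xs \<longrightarrow> (xs ! i, xs ! Suc i) \<in> arcs G)"

definition is_closed_walk :: "'a digraph \<Rightarrow> 'a list \<Rightarrow> bool" where
  "is_closed_walk G xs \<longleftrightarrow> is_walk G xs \<and> hd xs = last xs"

definition in_Ta :: "'a digraph \<Rightarrow> bool" where
  "in_Ta G \<longleftrightarrow> is_digraph G \<and> \<not> (\<exists>xs. is_closed_walk (loopfree G) xs)"

definition is_poset :: "'a digraph \<Rightarrow> bool" where
  "is_poset G \<longleftrightarrow> is_digraph G \<and> refl_on (verts G) (arcs G) \<and> antisym (arcs G) \<and> trans (arcs G)"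

definition in_Pstar :: "'a digraph \<Rightarrow> bool" where
  "in_Pstar G \<longleftrightarrow> (\<exists>P. is_poset P \<and> G = loopfree P)"

definition adjacent :: "'a digraph \<Rightarrow> 'a \<Rightarrow> 'a \<Rightarrow> bool" where
  "adjacent G u w \<longleftrightarrow> (u, w) \<in> arcs G \<or> (w, u) \<in> arcs G"

definition connected_in :: "'a digraph \<Rightarrow> 'a set \<Rightarrow> 'a \<Rightarrow> 'a \<Rightarrow> bool" where
  "connected_in G X v w \<longleftrightarrow> (\<lambda>a b. a \<in> X \<and> b \<in> X \<and> adjacent G a b)\<^sup>*\<^sup>* v w"

definition gamma :: "'a digraph \<Rightarrow> 'a set \<Rightarrow> 'a \<Rightarrow> 'a set" where
  "gamma G X v = {w \<in> X. connected_in G X v w}"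

definition Gamma :: "'a digraph \<Rightarrow> ('a \<Rightarrow> 'b) \<Rightarrow> 'a \<Rightarrow> 'a set" where
  "Gamma G \<xi> v = gamma G {u \<in> verts G. \<xi> u = \<xi> v} v"

definition dsum :: "'a digraph \<Rightarrow> 'b digraph \<Rightarrow> ('a + 'b) digraph" where
  "dsum G H = (Inl ` verts G \<union> Inr ` verts H,
               (\<lambda>(u, w). (Inl u, Inl w)) ` arcs G \<union> (\<lambda>(u, w). (Inr u, Inr w)) ` arcs H)"

text \<open>Classes of test digraphs are represented by sets of digraphs on vertex type nat
  (every finite digraph has an isomorphic copy there).\<close>
definition iso_digraphs :: "'a digraph \<Rightarrow> 'b digraph \<Rightarrow> bool" where
  "iso_digraphs G H \<longleftrightarrow> (\<exists>f. bij_betw f (verts G) (verts H) \<and>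
     (\<forall>u \<in> verts G. \<forall>w \<in> verts G. (u, w) \<in> arcs G \<longleftrightarrow> (f u, f w) \<in> arcs H))"

definition iso_closed :: "nat digraph set \<Rightarrow> bool" where
  "iso_closed C \<longleftrightarrow> (\<forall>G \<in> C. \<forall>H. is_digraph H \<and> iso_digraphs G H \<longrightarrow> H \<in> C)"

definition gamma_le :: "nat digraph set \<Rightarrow> 'a digraph \<Rightarrow> 'b digraph \<Rightarrow> bool" where
  "gamma_le C R S \<longleftrightarrow> (\<exists>\<rho> :: nat digraph \<Rightarrow> (nat \<Rightarrow> 'a) \<Rightarrow> (nat \<Rightarrow> 'b).
     \<forall>G \<in> C. (\<forall>\<xi> \<in> homs G R. \<rho> G \<xi> \<in> homs G S)
           \<and> inj_on (\<rho> G) (homs G R)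
           \<and> (\<forall>\<xi> \<in> homs G R. \<forall>v \<in> verts G. Gamma G (\<rho> G \<xi>) v = Gamma G \<xi> v))"

end

theory Submission
  imports Defs
begin



definition ind :: "'a digraph \<Rightarrow> 'a set \<Rightarrow> 'a digraph" where
  "ind G X = (X, arcs G \<inter> X \<times> X)"

lemma verts_ind[simp]: "verts (ind G X) = X" by (simp add: ind_def verts_def)
lemma arcs_ind[simp]: "arcs (ind G X) = arcs G \<inter> X \<times> X" by (simp add: ind_def arcs_def)

lemma gamma_ind:
  assumes "F \<subseteq> X"
  shows "gamma G F v = gamma (ind G X) F v"
proof -
  have "(\<lambda>a b. a \<in> F \<and> b \<in> F \<and> adjacent G a b) = (\<lambda>a b. a \<in> F \<and> b \<in> F \<and> adjacent (ind G X) a b)"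
    using assms by (auto simp: adjacent_def fun_eq_iff)
  then show ?thesis by (simp add: gamma_def connected_in_def)
qed

lemma verts_dsum[simp]: "verts (dsum G H) = Inl ` verts G \<union> Inr ` verts H"
  by (simp add: dsum_def verts_def)
lemma arcs_dsum: "arcs (dsum G H) = (\<lambda>(u, w). (Inl u, Inl w)) ` arcs G \<union> (\<lambda>(u, w). (Inr u, Inr w)) ` arcs H"
  by (simp add: dsum_def arcs_def)

lemma arcs_dsum_Inl[simp]: "(Inl a, Inl b) \<in> arcs (dsum G H) \<longleftrightarrow> (a, b) \<in> arcs G" by (auto simp: arcs_dsum)
lemma arcs_dsum_Inr[simp]: "(Inr a, Inr b) \<in> arcs (dsum G H) \<longleftrightarrow> (a, b) \<in> arcs H" by (auto simp: arcs_dsum)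
lemma arcs_dsum_isl: "(x, y) \<in> arcs (dsum G H) \<Longrightarrow> isl x = isl y" by (auto simp: arcs_dsum)

lemma homs_undef: "\<xi> \<in> homs G H \<Longrightarrow> v \<notin> verts G \<Longrightarrow> \<xi> v = undefined"
  by (auto simp: homs_def PiE_def extensional_def)

lemma homs_vert: "\<xi> \<in> homs G H \<Longrightarrow> v \<in> verts G \<Longrightarrow> \<xi> v \<in> verts H"
  by (auto simp: homs_def PiE_def)

lemma homs_arc: "\<xi> \<in> homs G H \<Longrightarrow> (a, b) \<in> arcs G \<Longrightarrow> (\<xi> a, \<xi> b) \<in> arcs H"
  by (auto simp: homs_def)

lemma homsI:
  assumes "\<And>v. v \<in> verts G \<Longrightarrow> \<xi> v \<in> verts H"
    and "\<And>v. v \<notin> verts G \<Longrightarrow> \<xi> v = undefined"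
    and "\<And>a b. (a, b) \<in> arcs G \<Longrightarrow> (\<xi> a, \<xi> b) \<in> arcs H"
  shows "\<xi> \<in> homs G H"
  using assms by (auto simp: homs_def PiE_def extensional_def)

lemma sum_lemma:
  fixes Dp :: "nat digraph set"
    and R1 :: "'a digraph" and R2 :: "'b digraph"
    and S1 :: "'c digraph" and S2 :: "'d digraph"
  assumes dg: "\<And>G. G \<in> Dp \<Longrightarrow> is_digraph G"
    and closed: "\<And>G X. G \<in> Dp \<Longrightarrow> X \<subseteq> verts G \<Longrightarrow> X \<noteq> {} \<Longrightarrow> ind G X \<in> Dp"
    and le1: "gamma_le Dp R1 S1" and le2: "gamma_le Dp R2 S2"
  shows "gamma_le Dp (dsum R1 R2) (dsum S1 S2)"
proof -
  obtain \<rho>1 :: "nat digraph \<Rightarrow> (nat \<Rightarrow> 'a) \<Rightarrow> (nat \<Rightarrow> 'c)" where r1: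
    "\<And>G. G \<in> Dp \<Longrightarrow> (\<forall>\<xi> \<in> homs G R1. \<rho>1 G \<xi> \<in> homs G S1)
           \<and> inj_on (\<rho>1 G) (homs G R1)
           \<and> (\<forall>\<xi> \<in> homs G R1. \<forall>v \<in> verts G. Gamma G (\<rho>1 G \<xi>) v = Gamma G \<xi> v)"
    using le1 unfolding gamma_le_def by blast
  obtain \<rho>2 :: "nat digraph \<Rightarrow> (nat \<Rightarrow> 'b) \<Rightarrow> (nat \<Rightarrow> 'd)" where r2:
    "\<And>G. G \<in> Dp \<Longrightarrow> (\<forall>\<xi> \<in> homs G R2. \<rho>2 G \<xi> \<in> homs G S2)
           \<and> inj_on (\<rho>2 G) (homs G R2)
           \<and> (\<forall>\<xi> \<in> homs G R2. \<forall>v \<in> verts G. Gamma G (\<rho>2 G \<xi>) v = Gamma G \<xi> v)"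
    using le2 unfolding gamma_le_def by blast
  define V1 where "V1 G \<xi> = {v \<in> verts G. isl (\<xi> v)}" for G :: "nat digraph" and \<xi> :: "nat \<Rightarrow> 'a + 'b"
  define V2 where "V2 G \<xi> = {v \<in> verts G. \<not> isl (\<xi> v)}" for G :: "nat digraph" and \<xi> :: "nat \<Rightarrow> 'a + 'b"
  define x1 where "x1 G \<xi> = restrict (\<lambda>v. projl (\<xi> v)) (V1 G \<xi>)" for G \<xi>
  define x2 where "x2 G \<xi> = restrict (\<lambda>v. projr (\<xi> v)) (V2 G \<xi>)" for G \<xi>
  define \<rho> where "\<rho> G \<xi> = restrict (\<lambda>v. if isl (\<xi> v) then Inl (\<rho>1 (ind G (V1 G \<xi>)) (x1 G \<xi>) v)
      else Inr (\<rho>2 (ind G (V2 G \<xi>)) (x2 G \<xi>) v)) (verts G)" for G \<xi>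
  have main: "(\<forall>\<xi> \<in> homs G (dsum R1 R2). \<rho> G \<xi> \<in> homs G (dsum S1 S2))
           \<and> inj_on (\<rho> G) (homs G (dsum R1 R2))
           \<and> (\<forall>\<xi> \<in> homs G (dsum R1 R2). \<forall>v \<in> verts G. Gamma G (\<rho> G \<xi>) v = Gamma G \<xi> v)"
    if G: "G \<in> Dp" for G
  proof -
    have x1h: "x1 G \<xi> \<in> homs (ind G (V1 G \<xi>)) R1" if xi: "\<xi> \<in> homs G (dsum R1 R2)" for \<xi>
    proof (rule homsI)
      fix v assume v: "v \<in> verts (ind G (V1 G \<xi>))"
      then have "v \<in> verts G" "isl (\<xi> v)" by (auto simp: V1_def)
      moreover have "\<xi> v \<in> Inl ` verts R1 \<union> Inr ` verts R2" using homs_vert[OF xi] \<open>v \<in> verts G\<close> by simp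
      ultimately have "projl (\<xi> v) \<in> verts R1" by auto
      then show "x1 G \<xi> v \<in> verts R1" using v by (simp add: x1_def)
    next
      fix v assume "v \<notin> verts (ind G (V1 G \<xi>))" then show "x1 G \<xi> v = undefined" by (simp add: x1_def)
    next
      fix a b assume ab: "(a, b) \<in> arcs (ind G (V1 G \<xi>))"
      then have "(\<xi> a, \<xi> b) \<in> arcs (dsum R1 R2)" "isl (\<xi> a)" "isl (\<xi> b)" using homs_arc[OF xi]
        by (auto simp: V1_def)
      then show "(x1 G \<xi> a, x1 G \<xi> b) \<in> arcs R1" using ab
        by (auto simp: x1_def isl_def arcs_dsum)
    qed
    have x2h: "x2 G \<xi> \<in> homs (ind G (V2 G \<xi>)) R2" if xi: "\<xi> \<in> homs G (dsum R1 R2)" for \<xi>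
    proof (rule homsI)
      fix v assume v: "v \<in> verts (ind G (V2 G \<xi>))"
      then have "v \<in> verts G" "\<not> isl (\<xi> v)" by (auto simp: V2_def)
      moreover have "\<xi> v \<in> Inl ` verts R1 \<union> Inr ` verts R2" using homs_vert[OF xi] \<open>v \<in> verts G\<close> by simp
      ultimately have "projr (\<xi> v) \<in> verts R2" by auto
      then show "x2 G \<xi> v \<in> verts R2" using v by (simp add: x2_def)
    next
      fix v assume "v \<notin> verts (ind G (V2 G \<xi>))" then show "x2 G \<xi> v = undefined" by (simp add: x2_def)
    next
      fix a b assume ab: "(a, b) \<in> arcs (ind G (V2 G \<xi>))"
      then have "(\<xi> a, \<xi> b) \<in> arcs (dsum R1 R2)" "\<not> isl (\<xi> a)" "\<not> isl (\<xi> b)" using homs_arc[OF xi]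
        by (auto simp: V2_def)
      then show "(x2 G \<xi> a, x2 G \<xi> b) \<in> arcs R2" using ab
        by (auto simp: x2_def isl_def arcs_dsum)
    qed
    have D1: "ind G (V1 G \<xi>) \<in> Dp" if "v \<in> V1 G \<xi>" for \<xi> v
      using closed[OF G, of "V1 G \<xi>"] that by (auto simp: V1_def)
    have D2: "ind G (V2 G \<xi>) \<in> Dp" if "v \<in> V2 G \<xi>" for \<xi> v
      using closed[OF G, of "V2 G \<xi>"] that by (auto simp: V2_def)
    have hom: "\<rho> G \<xi> \<in> homs G (dsum S1 S2)" if xi: "\<xi> \<in> homs G (dsum R1 R2)" for \<xi>
    proof (rule homsI)
      fix v assume v: "v \<in> verts G"
      show "\<rho> G \<xi> v \<in> verts (dsum S1 S2)"
      proof (cases "isl (\<xi> v)")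
        case True
        then have v1: "v \<in> V1 G \<xi>" using v by (simp add: V1_def)
        have "\<rho>1 (ind G (V1 G \<xi>)) (x1 G \<xi>) v \<in> verts S1"
          using r1[OF D1[OF v1]] x1h[OF xi] homs_vert v1 by fastforce
        then show ?thesis using True v by (simp add: \<rho>_def)
      next
        case False
        then have v1: "v \<in> V2 G \<xi>" using v by (simp add: V2_def)
        have "\<rho>2 (ind G (V2 G \<xi>)) (x2 G \<xi>) v \<in> verts S2"
          using r2[OF D2[OF v1]] x2h[OF xi] homs_vert v1 by fastforce
        then show ?thesis using False v by (simp add: \<rho>_def)
      qed
    next
      fix v assume "v \<notin> verts G" then show "\<rho> G \<xi> v = undefined" by (simp add: \<rho>_def)
    next
      fix a b assume ab: "(a, b) \<in> arcs G"
      have ab': "(\<xi> a, \<xi> b) \<in> arcs (dsum R1 R2)" using homs_arc[OF xi ab] .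
      have abv: "a \<in> verts G" "b \<in> verts G" using ab dg[OF G] by (auto simp: is_digraph_def)
      show "(\<rho> G \<xi> a, \<rho> G \<xi> b) \<in> arcs (dsum S1 S2)"
      proof (cases "isl (\<xi> a)")
        case True
        then have "isl (\<xi> b)" using arcs_dsum_isl[OF ab'] by simp
        then have v1: "a \<in> V1 G \<xi>" "b \<in> V1 G \<xi>" using True abv by (auto simp: V1_def)
        have "(\<rho>1 (ind G (V1 G \<xi>)) (x1 G \<xi>) a, \<rho>1 (ind G (V1 G \<xi>)) (x1 G \<xi>) b) \<in> arcs S1"
          using r1[OF D1[OF v1(1)]] x1h[OF xi] homs_arc v1 ab by fastforce
        then show ?thesis using True \<open>isl (\<xi> b)\<close> abv by (simp add: \<rho>_def)
      next
        case False
        then have "\<not> isl (\<xi> b)" using arcs_dsum_isl[OF ab'] by simp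
        then have v1: "a \<in> V2 G \<xi>" "b \<in> V2 G \<xi>" using False abv by (auto simp: V2_def)
        have "(\<rho>2 (ind G (V2 G \<xi>)) (x2 G \<xi>) a, \<rho>2 (ind G (V2 G \<xi>)) (x2 G \<xi>) b) \<in> arcs S2"
          using r2[OF D2[OF v1(1)]] x2h[OF xi] homs_arc v1 ab by fastforce
        then show ?thesis using False \<open>\<not> isl (\<xi> b)\<close> abv by (simp add: \<rho>_def)
      qed
    qed
    have isl_rho: "isl (\<rho> G \<xi> v) = isl (\<xi> v)" if "v \<in> verts G" for \<xi> v
      using that by (simp add: \<rho>_def)
    have rho1: "\<rho> G \<xi> v = Inl (\<rho>1 (ind G (V1 G \<xi>)) (x1 G \<xi>) v)" if "v \<in> V1 G \<xi>" for \<xi> v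
      using that by (simp add: \<rho>_def V1_def)
    have rho2: "\<rho> G \<xi> v = Inr (\<rho>2 (ind G (V2 G \<xi>)) (x2 G \<xi>) v)" if "v \<in> V2 G \<xi>" for \<xi> v
      using that by (simp add: \<rho>_def V2_def)
    have inj: "inj_on (\<rho> G) (homs G (dsum R1 R2))"
    proof (rule inj_onI)
      fix \<xi> \<eta> assume xi: "\<xi> \<in> homs G (dsum R1 R2)" and eta: "\<eta> \<in> homs G (dsum R1 R2)"
        and eq: "\<rho> G \<xi> = \<rho> G \<eta>"
      have il: "isl (\<xi> v) = isl (\<eta> v)" if "v \<in> verts G" for v
        using isl_rho[OF that, of \<xi>] isl_rho[OF that, of \<eta>] eq by simp
      have e1: "V1 G \<xi> = V1 G \<eta>" using il by (auto simp: V1_def)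
      have e2: "V2 G \<xi> = V2 G \<eta>" using il by (auto simp: V2_def)
      have X1: "x1 G \<xi> = x1 G \<eta>"
      proof (cases "V1 G \<xi> = {}")
        case True then show ?thesis using e1 by (simp add: x1_def restrict_def)
      next
        case False
        then obtain w where w: "w \<in> V1 G \<xi>" by blast
        have "\<rho>1 (ind G (V1 G \<xi>)) (x1 G \<xi>) = \<rho>1 (ind G (V1 G \<xi>)) (x1 G \<eta>)"
        proof
          fix v show "\<rho>1 (ind G (V1 G \<xi>)) (x1 G \<xi>) v = \<rho>1 (ind G (V1 G \<xi>)) (x1 G \<eta>) v"
          proof (cases "v \<in> V1 G \<xi>")
            case True
            then show ?thesis using rho1[OF True] rho1[of v \<eta>] True e1 eq by simp
          next
            case False
            have "\<rho>1 (ind G (V1 G \<xi>)) (x1 G \<xi>) \<in> homs (ind G (V1 G \<xi>)) S1"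
              using r1[OF D1[OF w]] x1h[OF xi] by blast
            moreover have "\<rho>1 (ind G (V1 G \<xi>)) (x1 G \<eta>) \<in> homs (ind G (V1 G \<xi>)) S1"
              using r1[OF D1[OF w]] x1h[OF eta] e1 by simp
            ultimately show ?thesis using False homs_undef[of _ "ind G (V1 G \<xi>)" S1 v] by (metis verts_ind)
          qed
        qed
        moreover have "inj_on (\<rho>1 (ind G (V1 G \<xi>))) (homs (ind G (V1 G \<xi>)) R1)"
          using r1[OF D1[OF w]] by blast
        ultimately show ?thesis using x1h[OF xi] x1h[OF eta] e1 by (auto dest: inj_onD)
      qed
      have X2: "x2 G \<xi> = x2 G \<eta>"
      proof (cases "V2 G \<xi> = {}")
        case True then show ?thesis using e2 by (simp add: x2_def restrict_def)
      next
        case False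
        then obtain w where w: "w \<in> V2 G \<xi>" by blast
        have "\<rho>2 (ind G (V2 G \<xi>)) (x2 G \<xi>) = \<rho>2 (ind G (V2 G \<xi>)) (x2 G \<eta>)"
        proof
          fix v show "\<rho>2 (ind G (V2 G \<xi>)) (x2 G \<xi>) v = \<rho>2 (ind G (V2 G \<xi>)) (x2 G \<eta>) v"
          proof (cases "v \<in> V2 G \<xi>")
            case True
            then show ?thesis using rho2[OF True] rho2[of v \<eta>] True e2 eq by simp
          next
            case False
            have "\<rho>2 (ind G (V2 G \<xi>)) (x2 G \<xi>) \<in> homs (ind G (V2 G \<xi>)) S2"
              using r2[OF D2[OF w]] x2h[OF xi] by blast
            moreover have "\<rho>2 (ind G (V2 G \<xi>)) (x2 G \<eta>) \<in> homs (ind G (V2 G \<xi>)) S2"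
              using r2[OF D2[OF w]] x2h[OF eta] e2 by simp
            ultimately show ?thesis using False homs_undef[of _ "ind G (V2 G \<xi>)" S2 v] by (metis verts_ind)
          qed
        qed
        moreover have "inj_on (\<rho>2 (ind G (V2 G \<xi>))) (homs (ind G (V2 G \<xi>)) R2)"
          using r2[OF D2[OF w]] by blast
        ultimately show ?thesis using x2h[OF xi] x2h[OF eta] e2 by (auto dest: inj_onD)
      qed
      show "\<xi> = \<eta>"
      proof
        fix v show "\<xi> v = \<eta> v"
        proof (cases "v \<in> verts G")
          case False then show ?thesis using homs_undef[OF xi] homs_undef[OF eta] by simp
        next
          case v: True
          show ?thesis
          proof (cases "isl (\<xi> v)")
            case True
            then have "v \<in> V1 G \<xi>" "v \<in> V1 G \<eta>" using v il by (auto simp: V1_def)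
            then have "projl (\<xi> v) = projl (\<eta> v)" using fun_cong[OF X1, of v]
              unfolding x1_def by simp
            then show ?thesis using True il[OF v] by (metis isl_def sum.collapse(1))
          next
            case False
            then have "v \<in> V2 G \<xi>" "v \<in> V2 G \<eta>" using v il by (auto simp: V2_def)
            then have "projr (\<xi> v) = projr (\<eta> v)" using fun_cong[OF X2, of v]
              unfolding x2_def by simp
            then show ?thesis using False il[OF v] by (metis sum.collapse(2))
          qed
        qed
      qed
    qed
    have gam: "Gamma G (\<rho> G \<xi>) v = Gamma G \<xi> v" if xi: "\<xi> \<in> homs G (dsum R1 R2)" and v: "v \<in> verts G" for \<xi> v
    proof (cases "isl (\<xi> v)")
      case True
      define H where "H = ind G (V1 G \<xi>)"
      have v1: "v \<in> V1 G \<xi>" using True v by (simp add: V1_def)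
      have F: "{u \<in> verts G. \<rho> G \<xi> u = \<rho> G \<xi> v} = {u \<in> verts H. \<rho>1 H (x1 G \<xi>) u = \<rho>1 H (x1 G \<xi>) v}"
        using v1 isl_rho by (auto simp: H_def rho1 V1_def \<rho>_def split: if_splits)
      have F': "{u \<in> verts G. \<xi> u = \<xi> v} = {u \<in> verts H. x1 G \<xi> u = x1 G \<xi> v}"
        using v1 by (auto simp: H_def V1_def x1_def) (metis isl_def sum.collapse(1))+
      have "Gamma G (\<rho> G \<xi>) v = gamma H {u \<in> verts H. \<rho>1 H (x1 G \<xi>) u = \<rho>1 H (x1 G \<xi>) v} v"
        unfolding Gamma_def F H_def by (rule gamma_ind) auto
      also have "\<dots> = Gamma H (x1 G \<xi>) v"
        using r1[OF D1[OF v1]] x1h[OF xi] v1 unfolding Gamma_def H_def by simp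
      also have "\<dots> = gamma G {u \<in> verts G. \<xi> u = \<xi> v} v"
        unfolding Gamma_def F' H_def by (rule gamma_ind[symmetric]) auto
      finally show ?thesis by (simp add: Gamma_def)
    next
      case False
      define H where "H = ind G (V2 G \<xi>)"
      have v1: "v \<in> V2 G \<xi>" using False v by (simp add: V2_def)
      have F: "{u \<in> verts G. \<rho> G \<xi> u = \<rho> G \<xi> v} = {u \<in> verts H. \<rho>2 H (x2 G \<xi>) u = \<rho>2 H (x2 G \<xi>) v}"
        using v1 isl_rho by (auto simp: H_def rho2 V2_def \<rho>_def split: if_splits)
      have F': "{u \<in> verts G. \<xi> u = \<xi> v} = {u \<in> verts H. x2 G \<xi> u = x2 G \<xi> v}"
        using v1 by (auto simp: H_def V2_def x2_def) (metis sum.collapse(2))+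
      have "Gamma G (\<rho> G \<xi>) v = gamma H {u \<in> verts H. \<rho>2 H (x2 G \<xi>) u = \<rho>2 H (x2 G \<xi>) v} v"
        unfolding Gamma_def F H_def by (rule gamma_ind) auto
      also have "\<dots> = Gamma H (x2 G \<xi>) v"
        using r2[OF D2[OF v1]] x2h[OF xi] v1 unfolding Gamma_def H_def by simp
      also have "\<dots> = gamma G {u \<in> verts G. \<xi> u = \<xi> v} v"
        unfolding Gamma_def F' H_def by (rule gamma_ind[symmetric]) auto
      finally show ?thesis by (simp add: Gamma_def)
    qed
    show ?thesis using hom inj gam by blast
  qed
  then show ?thesis unfolding gamma_le_def by blast
qed




definition sc :: "'a digraph \<Rightarrow> 'a \<Rightarrow> 'a \<Rightarrow> bool" where
  "sc G u w \<longleftrightarrow> (u, w) \<in> (arcs G)\<^sup>* \<and> (w, u) \<in> (arcs G)\<^sup>*"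

definition rep :: "nat digraph \<Rightarrow> nat \<Rightarrow> nat" where
  "rep G u = (LEAST w. sc G u w)"

definition quot :: "nat digraph \<Rightarrow> nat digraph" where
  "quot G = (rep G ` verts G, (\<lambda>(a, b). (rep G a, rep G b)) ` arcs G)"

lemma verts_quot: "verts (quot G) = rep G ` verts G" by (simp add: quot_def verts_def)
lemma arcs_quot: "arcs (quot G) = (\<lambda>(a, b). (rep G a, rep G b)) ` arcs G" by (simp add: quot_def arcs_def)

lemma sc_refl: "sc G u u" by (simp add: sc_def)
lemma sc_sym: "sc G u w \<Longrightarrow> sc G w u" by (simp add: sc_def)
lemma sc_trans: "sc G u w \<Longrightarrow> sc G w x \<Longrightarrow> sc G u x" by (auto simp: sc_def)

lemma sc_rep: "sc G u (rep G u)"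
  unfolding rep_def by (rule LeastI[of "sc G u" u]) (rule sc_refl)

lemma rep_eq: "sc G u w \<Longrightarrow> rep G u = rep G w"
proof -
  assume "sc G u w"
  then have "sc G u = sc G w" by (auto intro: sc_trans sc_sym simp: fun_eq_iff)
  then show ?thesis by (simp add: rep_def)
qed

lemma rep_rep: "rep G (rep G u) = rep G u"
  using rep_eq[OF sc_sym[OF sc_rep]] by simp

lemma rep_eq_sc: "rep G u = rep G w \<Longrightarrow> sc G u w"
  by (metis sc_rep sc_sym sc_trans)

lemma rtrancl_vert: "is_digraph G \<Longrightarrow> u \<in> verts G \<Longrightarrow> (u, w) \<in> (arcs G)\<^sup>* \<Longrightarrow> w \<in> verts G"
  by (erule rtranclE) (auto simp: is_digraph_def)

lemma rep_vert: assumes "is_digraph G" "u \<in> verts G" shows "rep G u \<in> verts G"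
proof -
  have "(u, rep G u) \<in> (arcs G)\<^sup>*" using sc_rep[of G u] by (simp add: sc_def)
  then show ?thesis by (rule rtrancl_vert[OF assms])
qed

lemma quot_digraph: "is_digraph G \<Longrightarrow> is_digraph (quot G)"
  unfolding is_digraph_def verts_quot arcs_quot
  apply (intro conjI)
    apply simp
   apply simp
  using rep_vert[unfolded is_digraph_def] by (fastforce simp: is_digraph_def)

lemma arcs_quot_rtrancl: "(q, q') \<in> arcs (quot G) \<Longrightarrow> (q, q') \<in> (arcs G)\<^sup>*"
proof -
  assume "(q, q') \<in> arcs (quot G)"
  then obtain a b where ab: "(a, b) \<in> arcs G" "q = rep G a" "q' = rep G b" by (auto simp: arcs_quot)
  have "(q, a) \<in> (arcs G)\<^sup>*" using sc_rep[of G a] ab by (simp add: sc_def)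
  moreover have "(b, q') \<in> (arcs G)\<^sup>*" using sc_rep[of G b] ab by (simp add: sc_def)
  ultimately show ?thesis using ab(1) by (meson rtrancl.rtrancl_into_rtrancl rtrancl_trans)
qed

lemma walk_rtrancl:
  assumes "\<forall>i. Suc i < length xs \<longrightarrow> (xs ! i, xs ! Suc i) \<in> E\<^sup>*"
  shows "i \<le> j \<Longrightarrow> j < length xs \<Longrightarrow> (xs ! i, xs ! j) \<in> E\<^sup>*"
proof (induction j)
  case 0 then show ?case by simp
next
  case (Suc j)
  show ?case
  proof (cases "i = Suc j")
    case True then show ?thesis by simp
  next
    case False
    then have "(xs ! i, xs ! j) \<in> E\<^sup>*" using Suc by simp
    moreover have "(xs ! j, xs ! Suc j) \<in> E\<^sup>*" using assms Suc.prems by simp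
    ultimately show ?thesis by (rule rtrancl_trans)
  qed
qed

lemma arcs_loopfree: "arcs (loopfree G) = arcs G - {(v, v) | v. True}"
  by (simp add: loopfree_def arcs_def)

lemma quot_Ta: assumes "is_digraph G" shows "in_Ta (quot G)"
proof -
  have "False" if cw: "is_closed_walk (loopfree (quot G)) xs" for xs
  proof -
    have len: "length xs \<ge> 2" and st: "\<forall>i. Suc i < length xs \<longrightarrow> (xs ! i, xs ! Suc i) \<in> arcs (loopfree (quot G))"
      and hl: "hd xs = last xs" using cw by (auto simp: is_closed_walk_def is_walk_def)
    have st': "\<forall>i. Suc i < length xs \<longrightarrow> (xs ! i, xs ! Suc i) \<in> (arcs G)\<^sup>*"
      using st arcs_quot_rtrancl by (auto simp: arcs_loopfree)
    have a01: "(xs ! 0, xs ! 1) \<in> arcs (quot G)" "xs ! 0 \<noteq> xs ! 1" using st[rule_format, of 0] len by (auto simp: arcs_loopfree)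
    have "(xs ! 0, xs ! 1) \<in> (arcs G)\<^sup>*" using st' len by auto
    moreover have "(xs ! 1, xs ! (length xs - 1)) \<in> (arcs G)\<^sup>*"
      using walk_rtrancl[OF st', of 1 "length xs - 1"] len by simp
    moreover have "xs ! (length xs - 1) = xs ! 0"
    proof -
      have ne: "xs \<noteq> []" using len by auto
      show ?thesis using hl hd_conv_nth[OF ne] last_conv_nth[OF ne] by simp
    qed
    ultimately have "sc G (xs ! 0) (xs ! 1)" by (simp add: sc_def)
    then have "rep G (xs ! 0) = rep G (xs ! 1)" by (rule rep_eq)
    moreover have "xs ! 0 \<in> rep G ` verts G" "xs ! 1 \<in> rep G ` verts G"
      using a01(1) quot_digraph[OF assms] unfolding is_digraph_def verts_quot by auto
    ultimately show False using a01(2) by (auto simp: rep_rep)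
  qed
  then show ?thesis using quot_digraph[OF assms] by (auto simp: in_Ta_def)
qed

lemma trancl_walk:
  "(x, y) \<in> r\<^sup>+ \<Longrightarrow> \<exists>xs. length xs \<ge> 2 \<and> hd xs = x \<and> last xs = y \<and> (\<forall>i. Suc i < length xs \<longrightarrow> (xs ! i, xs ! Suc i) \<in> r)"
proof (induction rule: trancl_induct)
  case (base y)
  then show ?case by (intro exI[of _ "[x, y]"]) (auto simp: less_Suc_eq)
next
  case (step y z)
  then obtain xs where xs: "length xs \<ge> 2" "hd xs = x" "last xs = y" "\<forall>i. Suc i < length xs \<longrightarrow> (xs ! i, xs ! Suc i) \<in> r"
    by blast
  have "\<forall>i. Suc i < length (xs @ [z]) \<longrightarrow> ((xs @ [z]) ! i, (xs @ [z]) ! Suc i) \<in> r"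
  proof (intro allI impI)
    fix i assume i: "Suc i < length (xs @ [z])"
    show "((xs @ [z]) ! i, (xs @ [z]) ! Suc i) \<in> r"
    proof (cases "Suc i < length xs")
      case True then show ?thesis using xs(4) by (simp add: nth_append)
    next
      case False
      then have si: "Suc i = length xs" using i by simp
      have "xs \<noteq> []" using xs(1) by auto
      moreover have "i = length xs - 1" using si by simp
      ultimately have "xs ! i = y" using xs(3) last_conv_nth[of xs] by simp
      then show ?thesis using si step.hyps(2) by (simp add: nth_append)
    qed
  qed
  then show ?case using xs by (intro exI[of _ "xs @ [z]"]) (auto simp: hd_append)
qed

lemma hom_rtrancl: assumes xi: "\<xi> \<in> homs G R" shows "(u, w) \<in> (arcs G)\<^sup>* \<Longrightarrow> (\<xi> u, \<xi> w) \<in> (arcs R)\<^sup>*"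
proof (induction rule: rtrancl_induct)
  case base then show ?case by simp
next
  case (step y z)
  then show ?case using homs_arc[OF xi step.hyps(2)] by (meson rtrancl.rtrancl_into_rtrancl)
qed

lemma rtrancl_loopfree: "(x, y) \<in> (arcs R)\<^sup>* \<Longrightarrow> (x, y) \<in> (arcs (loopfree R))\<^sup>*"
proof (induction rule: rtrancl_induct)
  case base then show ?case by simp
next
  case (step y z)
  then show ?case by (cases "y = z") (auto simp: arcs_loopfree intro: rtrancl.rtrancl_into_rtrancl)
qed

lemma hom_sc:
  assumes noR: "\<not> (\<exists>xs. is_closed_walk (loopfree R) xs)" and xi: "\<xi> \<in> homs G R" and sc: "sc G u w"
  shows "\<xi> u = \<xi> w"
proof (rule ccontr)
  assume ne: "\<xi> u \<noteq> \<xi> w"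
  let ?L = "arcs (loopfree R)"
  have "(u, w) \<in> (arcs G)\<^sup>*" "(w, u) \<in> (arcs G)\<^sup>*" using sc by (auto simp: sc_def)
  then have "(\<xi> u, \<xi> w) \<in> (arcs R)\<^sup>*" "(\<xi> w, \<xi> u) \<in> (arcs R)\<^sup>*"
    using hom_rtrancl[OF xi] by auto
  then have "(\<xi> u, \<xi> w) \<in> ?L\<^sup>*" "(\<xi> w, \<xi> u) \<in> ?L\<^sup>*"
    by (metis rtrancl_loopfree)+
  then have "(\<xi> u, \<xi> w) \<in> ?L\<^sup>+" "(\<xi> w, \<xi> u) \<in> ?L\<^sup>*" using ne by (auto simp: rtrancl_eq_or_trancl)
  then have "(\<xi> u, \<xi> u) \<in> ?L\<^sup>+" by (rule trancl_rtrancl_trancl)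
  then obtain xs where "length xs \<ge> 2" "hd xs = \<xi> u" "last xs = \<xi> u" "\<forall>i. Suc i < length xs \<longrightarrow> (xs ! i, xs ! Suc i) \<in> ?L"
    using trancl_walk by metis
  then have "is_closed_walk (loopfree R) xs" by (simp add: is_closed_walk_def is_walk_def)
  then show False using noR by blast
qed




lemma conn_sc:
  assumes dg: "is_digraph G" and x: "x \<in> verts G" and sc: "sc G x y"
    and F: "\<And>z. z \<in> verts G \<Longrightarrow> sc G x z \<Longrightarrow> z \<in> F"
  shows "connected_in G F x y"
proof -
  have yx: "(y, x) \<in> (arcs G)\<^sup>*" and xy: "(x, y) \<in> (arcs G)\<^sup>*" using sc by (auto simp: sc_def)
  have "(x, w) \<in> (arcs G)\<^sup>* \<Longrightarrow> (w, y) \<in> (arcs G)\<^sup>* \<Longrightarrow> connected_in G F x w" for w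
  proof (induction rule: rtrancl_induct)
    case base then show ?case by (simp add: connected_in_def)
  next
    case (step p w)
    have py: "(p, y) \<in> (arcs G)\<^sup>*" using step by (meson converse_rtrancl_into_rtrancl)
    have c: "connected_in G F x p" using step.IH py .
    have "sc G x p" using step.hyps(1) py yx by (auto simp: sc_def)
    then have pF: "p \<in> F" using F rtrancl_vert[OF dg x step.hyps(1)] by blast
    have xw: "(x, w) \<in> (arcs G)\<^sup>*" using step.hyps by (meson rtrancl.rtrancl_into_rtrancl)
    have "sc G x w" using xw step.prems yx by (auto simp: sc_def)
    then have wF: "w \<in> F" using F rtrancl_vert[OF dg x xw] by blast
    have "adjacent G p w" using step.hyps(2) by (simp add: adjacent_def)
    then show ?case using c pF wF unfolding connected_in_def by (simp add: rtranclp.rtrancl_into_rtrancl)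
  qed
  then show ?thesis using xy by blast
qed

lemma gamma_quot:
  assumes dg: "is_digraph G" and fg: "\<And>u. u \<in> verts G \<Longrightarrow> f u = g (rep G u)" and v: "v \<in> verts G"
  shows "Gamma G f v = {u \<in> verts G. rep G u \<in> Gamma (quot G) g (rep G v)}"
proof -
  define F where "F = {u \<in> verts G. f u = f v}"
  define FQ where "FQ = {q \<in> verts (quot G). g q = g (rep G v)}"
  have Fc: "u \<in> F \<longleftrightarrow> u \<in> verts G \<and> rep G u \<in> FQ" for u
    using fg v by (auto simp: F_def FQ_def verts_quot)
  have Fsc: "z \<in> F" if "x \<in> F" "z \<in> verts G" "sc G x z" for x z
    using that fg rep_eq[OF that(3)] by (auto simp: F_def)
  have fw: "connected_in G F v u \<Longrightarrow> connected_in (quot G) FQ (rep G v) (rep G u)" for u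
    unfolding connected_in_def
  proof (induction rule: rtranclp_induct)
    case base then show ?case by simp
  next
    case (step y z)
    then have "rep G y \<in> FQ" "rep G z \<in> FQ" "adjacent (quot G) (rep G y) (rep G z)"
      using Fc by (auto simp: adjacent_def arcs_quot)
    then show ?case using step.IH by (simp add: rtranclp.rtrancl_into_rtrancl)
  qed
  have bw0: "(\<lambda>a b. a \<in> FQ \<and> b \<in> FQ \<and> adjacent (quot G) a b)\<^sup>*\<^sup>* (rep G v) q \<Longrightarrow> \<forall>u. u \<in> verts G \<longrightarrow> rep G u = q \<longrightarrow> connected_in G F v u" for q
  proof (induction rule: rtranclp_induct)
    case base
    show ?case
    proof (intro allI impI)
      fix u assume u: "u \<in> verts G" "rep G u = rep G v"
      have "sc G v u" using rep_eq_sc u(2) sc_sym by metis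
      moreover have "v \<in> F" using v by (simp add: F_def)
      ultimately show "connected_in G F v u" using conn_sc[OF dg v] Fsc by blast
    qed
  next
    case (step q1 q2)
    show ?case
    proof (intro allI impI)
      fix u assume u: "u \<in> verts G" "rep G u = q2"
      have q: "q1 \<in> FQ" "q2 \<in> FQ" "adjacent (quot G) q1 q2" using step.hyps(2) by auto
      obtain a b where ab: "adjacent G a b" "rep G a = q1" "rep G b = q2" "a \<in> verts G" "b \<in> verts G"
      proof -
        from q(3) consider "(q1, q2) \<in> arcs (quot G)" | "(q2, q1) \<in> arcs (quot G)" by (auto simp: adjacent_def)
        then show ?thesis
        proof cases
          case 1
          then obtain a b where "(a, b) \<in> arcs G" "q1 = rep G a" "q2 = rep G b" by (auto simp: arcs_quot)
          then show ?thesis using that[of a b] dg by (auto simp: adjacent_def is_digraph_def)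
        next
          case 2
          then obtain a b where "(b, a) \<in> arcs G" "q1 = rep G a" "q2 = rep G b" by (auto simp: arcs_quot)
          then show ?thesis using that[of a b] dg by (auto simp: adjacent_def is_digraph_def)
        qed
      qed
      have ca: "connected_in G F v a" using step.IH ab by blast
      have aF: "a \<in> F" "b \<in> F" using Fc ab q by auto
      have cb: "connected_in G F v b" using ca ab(1) aF unfolding connected_in_def
        by (simp add: rtranclp.rtrancl_into_rtrancl)
      have "sc G b u" using rep_eq_sc ab(3) u(2) by metis
      then have "connected_in G F b u" using conn_sc[OF dg ab(5)] Fsc[OF aF(2)] by blast
      then show "connected_in G F v u" using cb unfolding connected_in_def by (rule rtranclp_trans[rotated])
    qed
  qed
  have bw: "connected_in (quot G) FQ (rep G v) q \<Longrightarrow> \<forall>u. u \<in> verts G \<longrightarrow> rep G u = q \<longrightarrow> connected_in G F v u" for q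
    using bw0 unfolding connected_in_def by blast
  have "Gamma G f v = {u \<in> F. connected_in G F v u}" by (simp add: Gamma_def gamma_def F_def)
  also have "\<dots> = {u \<in> verts G. rep G u \<in> FQ \<and> connected_in (quot G) FQ (rep G v) (rep G u)}"
    using Fc fw bw by blast
  also have "\<dots> = {u \<in> verts G. rep G u \<in> Gamma (quot G) g (rep G v)}"
    by (simp add: Gamma_def gamma_def FQ_def)
  finally show ?thesis .
qed




lemma ta_extend:
  fixes R :: "'a digraph" and S :: "'c digraph"
  assumes noR: "\<not> (\<exists>xs. is_closed_walk (loopfree R) xs)" and le: "gamma_le {G. in_Ta G} R S"
  shows "gamma_le {G. is_digraph G} R S"
proof -
  obtain \<rho> :: "nat digraph \<Rightarrow> (nat \<Rightarrow> 'a) \<Rightarrow> (nat \<Rightarrow> 'c)" where r: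
    "\<And>G. in_Ta G \<Longrightarrow> (\<forall>\<xi> \<in> homs G R. \<rho> G \<xi> \<in> homs G S)
           \<and> inj_on (\<rho> G) (homs G R)
           \<and> (\<forall>\<xi> \<in> homs G R. \<forall>v \<in> verts G. Gamma G (\<rho> G \<xi>) v = Gamma G \<xi> v)"
    using le unfolding gamma_le_def by auto
  define \<rho>' where "\<rho>' G \<xi> = restrict (\<lambda>v. \<rho> (quot G) (restrict \<xi> (verts (quot G))) (rep G v)) (verts G)" for G \<xi>
  have "(\<forall>\<xi> \<in> homs G R. \<rho>' G \<xi> \<in> homs G S)
           \<and> inj_on (\<rho>' G) (homs G R)
           \<and> (\<forall>\<xi> \<in> homs G R. \<forall>v \<in> verts G. Gamma G (\<rho>' G \<xi>) v = Gamma G \<xi> v)"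
    if dg: "is_digraph G" for G
  proof -
    define Q where "Q = quot G"
    have rQ: "\<forall>\<xi> \<in> homs Q R. \<rho> Q \<xi> \<in> homs Q S" "inj_on (\<rho> Q) (homs Q R)"
      "\<forall>\<xi> \<in> homs Q R. \<forall>v \<in> verts Q. Gamma Q (\<rho> Q \<xi>) v = Gamma Q \<xi> v"
      using r[OF quot_Ta[OF dg]] unfolding Q_def by auto
    have repQ: "rep G u \<in> verts Q" if "u \<in> verts G" for u using that by (simp add: Q_def verts_quot)
    have xrep: "restrict \<xi> (verts Q) (rep G u) = \<xi> u" if xi: "\<xi> \<in> homs G R" and u: "u \<in> verts G" for \<xi> u
      using repQ[OF u] hom_sc[OF noR xi sc_sym[OF sc_rep[of G u]]] by simp
    have xQ: "restrict \<xi> (verts Q) \<in> homs Q R" if xi: "\<xi> \<in> homs G R" for \<xi>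
    proof (rule homsI)
      fix q assume "q \<in> verts Q"
      then obtain u where u: "u \<in> verts G" "q = rep G u" by (auto simp: Q_def verts_quot)
      then show "restrict \<xi> (verts Q) q \<in> verts R" using xrep[OF xi u(1)] homs_vert[OF xi u(1)] by simp
    next
      fix q assume "q \<notin> verts Q" then show "restrict \<xi> (verts Q) q = undefined" by simp
    next
      fix a b assume "(a, b) \<in> arcs Q"
      then obtain a' b' where ab: "(a', b') \<in> arcs G" "a = rep G a'" "b = rep G b'" by (auto simp: Q_def arcs_quot)
      then have "a' \<in> verts G" "b' \<in> verts G" using dg by (auto simp: is_digraph_def)
      then show "(restrict \<xi> (verts Q) a, restrict \<xi> (verts Q) b) \<in> arcs R"
        using ab xrep[OF xi] homs_arc[OF xi ab(1)] by simp
    qed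
    have rho'v: "\<rho>' G \<xi> u = \<rho> Q (restrict \<xi> (verts Q)) (rep G u)" if "u \<in> verts G" for \<xi> u
      using that by (simp add: \<rho>'_def Q_def)
    have hom: "\<rho>' G \<xi> \<in> homs G S" if xi: "\<xi> \<in> homs G R" for \<xi>
    proof (rule homsI)
      fix v assume v: "v \<in> verts G"
      show "\<rho>' G \<xi> v \<in> verts S" using rho'v[OF v] homs_vert[OF bspec[OF rQ(1) xQ[OF xi]] repQ[OF v]] by simp
    next
      fix v assume "v \<notin> verts G" then show "\<rho>' G \<xi> v = undefined" by (simp add: \<rho>'_def)
    next
      fix a b assume ab: "(a, b) \<in> arcs G"
      then have v: "a \<in> verts G" "b \<in> verts G" using dg by (auto simp: is_digraph_def)
      have "(rep G a, rep G b) \<in> arcs Q" using ab by (force simp: Q_def arcs_quot)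
      then show "(\<rho>' G \<xi> a, \<rho>' G \<xi> b) \<in> arcs S"
        using rho'v[OF v(1)] rho'v[OF v(2)] homs_arc[OF bspec[OF rQ(1) xQ[OF xi]]] by simp
    qed
    have inj: "inj_on (\<rho>' G) (homs G R)"
    proof (rule inj_onI)
      fix \<xi> \<eta> assume xi: "\<xi> \<in> homs G R" and eta: "\<eta> \<in> homs G R" and eq: "\<rho>' G \<xi> = \<rho>' G \<eta>"
      have "\<rho> Q (restrict \<xi> (verts Q)) = \<rho> Q (restrict \<eta> (verts Q))"
      proof
        fix q show "\<rho> Q (restrict \<xi> (verts Q)) q = \<rho> Q (restrict \<eta> (verts Q)) q"
        proof (cases "q \<in> verts Q")
          case True
          then obtain u where u: "u \<in> verts G" "q = rep G u" by (auto simp: Q_def verts_quot)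
          then show ?thesis using rho'v[OF u(1), of \<xi>] rho'v[OF u(1), of \<eta>] eq by simp
        next
          case False
          then show ?thesis using homs_undef[OF bspec[OF rQ(1) xQ[OF xi]]] homs_undef[OF bspec[OF rQ(1) xQ[OF eta]]]
            by simp
        qed
      qed
      then have e: "restrict \<xi> (verts Q) = restrict \<eta> (verts Q)"
        using inj_onD[OF rQ(2)] xQ[OF xi] xQ[OF eta] by blast
      show "\<xi> = \<eta>"
      proof
        fix u show "\<xi> u = \<eta> u"
        proof (cases "u \<in> verts G")
          case True
          then show ?thesis using xrep[OF xi True] xrep[OF eta True] e by metis
        next
          case False
          then show ?thesis using homs_undef[OF xi] homs_undef[OF eta] by simp
        qed
      qed
    qed
    have gam: "Gamma G (\<rho>' G \<xi>) v = Gamma G \<xi> v" if xi: "\<xi> \<in> homs G R" and v: "v \<in> verts G" for \<xi> v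
    proof -
      have "Gamma G (\<rho>' G \<xi>) v = {u \<in> verts G. rep G u \<in> Gamma (quot G) (\<rho> Q (restrict \<xi> (verts Q))) (rep G v)}"
        by (rule gamma_quot[OF dg _ v]) (rule rho'v)
      also have "\<dots> = {u \<in> verts G. rep G u \<in> Gamma (quot G) (restrict \<xi> (verts Q)) (rep G v)}"
        using rQ(3) xQ[OF xi] repQ[OF v] unfolding Q_def by simp
      also have "\<dots> = Gamma G \<xi> v"
        by (rule gamma_quot[OF dg _ v, symmetric]) (rule xrep[OF xi, symmetric])
      finally show ?thesis .
    qed
    show ?thesis using hom inj gam by blast
  qed
  then show ?thesis unfolding gamma_le_def by (intro exI[of _ \<rho>']) blast
qed

lemma gamma_le_mono: "gamma_le C R S \<Longrightarrow> C' \<subseteq> C \<Longrightarrow> gamma_le C' R S"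
  unfolding gamma_le_def by blast

lemma ind_digraph: "is_digraph G \<Longrightarrow> X \<subseteq> verts G \<Longrightarrow> X \<noteq> {} \<Longrightarrow> is_digraph (ind G X)"
  by (auto simp: is_digraph_def intro: finite_subset)

lemma ind_poset: "is_poset G \<Longrightarrow> X \<subseteq> verts G \<Longrightarrow> X \<noteq> {} \<Longrightarrow> is_poset (ind G X)"
  unfolding is_poset_def
  apply (intro conjI)
     apply (simp add: ind_digraph)
    apply (auto simp: refl_on_def)[1]
   apply (auto simp: antisym_def)[1]
  apply (unfold trans_def arcs_ind)
  apply blast
  done

lemma ind_loopfree: "ind (loopfree P) X = loopfree (ind P X)"
  by (auto simp: ind_def loopfree_def verts_def arcs_def)

lemma verts_loopfree: "verts (loopfree P) = verts P" by (simp add: loopfree_def verts_def)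




theorem corollary6:
  fixes Dp :: "nat digraph set"
    and R1 :: "'a digraph" and R2 :: "'b digraph"
    and S1 :: "'c digraph" and S2 :: "'d digraph"
  assumes cases:
    "(Dp = {G. is_digraph G} \<and> is_digraph R1 \<and> is_digraph R2)
     \<or> ({G. in_Ta G} \<subseteq> Dp \<and> Dp \<subseteq> {G. is_digraph G} \<and> iso_closed Dp \<and> in_Ta R1 \<and> in_Ta R2)
     \<or> (Dp = {G. is_poset G} \<and> is_poset R1 \<and> is_poset R2)
     \<or> (Dp = {G. in_Pstar G} \<and> in_Pstar R1 \<and> in_Pstar R2)"
    and S1: "is_digraph S1" and S2: "is_digraph S2"
    and le1: "gamma_le Dp R1 S1" and le2: "gamma_le Dp R2 S2"
  shows "gamma_le Dp (dsum R1 R2) (dsum S1 S2)"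
  using cases
proof (elim disjE conjE)
  assume D: "Dp = {G. is_digraph G}"
  show ?thesis using le1 le2 unfolding D
    by (intro sum_lemma) (auto intro: ind_digraph)
next
  assume T: "{G. in_Ta G} \<subseteq> Dp" and D: "Dp \<subseteq> {G. is_digraph G}" and t1: "in_Ta R1" and t2: "in_Ta R2"
  have g1: "gamma_le {G. is_digraph G} R1 S1"
    using t1 gamma_le_mono[OF le1 T] by (intro ta_extend) (auto simp: in_Ta_def)
  have g2: "gamma_le {G. is_digraph G} R2 S2"
    using t2 gamma_le_mono[OF le2 T] by (intro ta_extend) (auto simp: in_Ta_def)
  have "gamma_le {G. is_digraph G} (dsum R1 R2) (dsum S1 S2)"
    using g1 g2 by (intro sum_lemma) (auto intro: ind_digraph)
  then show ?thesis using D by (rule gamma_le_mono)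
next
  assume D: "Dp = {G. is_poset G}"
  have dg: "is_digraph G" if "G \<in> Dp" for G using that D unfolding is_poset_def by blast
  have cl: "ind G X \<in> Dp" if "G \<in> Dp" "X \<subseteq> verts G" "X \<noteq> {}" for G X
    using that D ind_poset by blast
  show ?thesis using le1 le2 dg cl by (intro sum_lemma) auto
next
  assume D: "Dp = {G. in_Pstar G}"
  have cl: "ind G X \<in> Dp" if GX: "G \<in> Dp" "X \<subseteq> verts G" "X \<noteq> {}" for G X
  proof -
    obtain P where P: "is_poset P" "G = loopfree P" using GX(1) D unfolding in_Pstar_def by blast
    have "is_poset (ind P X)" using ind_poset[OF P(1)] GX P(2) by (simp add: verts_loopfree)
    moreover have "ind G X = loopfree (ind P X)" using P(2) ind_loopfree by metis
    ultimately show ?thesis using D unfolding in_Pstar_def by blast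
  qed
  have dg: "is_digraph G" if GD: "G \<in> Dp" for G
  proof -
    obtain P where P: "is_poset P" "G = loopfree P" using GD D unfolding in_Pstar_def by blast
    then show ?thesis by (auto simp: is_poset_def is_digraph_def loopfree_def verts_def arcs_def)
  qed
  show ?thesis using le1 le2 dg cl by (intro sum_lemma) auto
qed


end
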